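(* Let $\mathcal{S}=(\mathscr{X},\nabla)$ be a non-commutative spacetime. Then there exists an implication $\to_{\mathcal{S}}:\mathscr{X}^{op}\times\mathscr{X}\to\mathscr{X}$ on the monoidal poset $\mathscr{X}$ such that for all $a,b,c\in\mathscr{X}$, \[ a\otimes\nabla b\le c \iff b\le a\to_{\mathcal{S}} c . \]
   Context: A monoidal poset $(A,\le,\otimes,e)$ is a poset with a monoid structure $(A,\otimes,e)$ whose multiplication is order preserving in each argument. A quantale is a monoidal poset whose underlying poset has all (arbitrary) joins and whose multiplication distributes over arbitrary joins in each argument. A monotone map $f$ between monoidal posets is oplax monoidal if $f(e)\le e$ and $f(a\otimes b)\le f(a)\otimes f(b)$ for all $a,b$. A non-commutative spacetime is a pair $(\mathscr{X},\nabla)$ where $\mathscr{X}$ is a quantale and $\nabla:\mathscr{X}\to\mathscr{X}$ is a join-preserving oplax monoidal map. An implication on a monoidal poset $(A,\le,\otimes,e)$ is a function $\to:A^{op}\times A\to A$, order reversing in its first and order preserving in its second argument, such that $e\le a\to a$ and $(a\to b)\otimes(b\to c)\le a\to c$ for all $a,b,c\in A$. *)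

theory Defs
  imports Main
begin

definition monoidal_poset :: "('a::order \<Rightarrow> 'a \<Rightarrow> 'a) \<Rightarrow> 'a \<Rightarrow> bool" where
  "monoidal_poset mul e \<longleftrightarrow>
     (\<forall>a b c. mul (mul a b) c = mul a (mul b c)) \<and>
     (\<forall>a. mul e a = a \<and> mul a e = a) \<and>
     (\<forall>a a' b b'. a \<le> a' \<longrightarrow> b \<le> b' \<longrightarrow> mul a b \<le> mul a' b')"

definition quantale :: "('a::complete_lattice \<Rightarrow> 'a \<Rightarrow> 'a) \<Rightarrow> 'a \<Rightarrow> bool" where
  "quantale mul e \<longleftrightarrow> monoidal_poset mul e \<and>
     (\<forall>a S. mul a (Sup S) = (SUP s\<in>S. mul a s)) \<and>
     (\<forall>a S. mul (Sup S) a = (SUP s\<in>S. mul s a))"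

definition oplax_monoidal ::
    "('a::order \<Rightarrow> 'a \<Rightarrow> 'a) \<Rightarrow> 'a \<Rightarrow> ('b::order \<Rightarrow> 'b \<Rightarrow> 'b) \<Rightarrow> 'b \<Rightarrow> ('a \<Rightarrow> 'b) \<Rightarrow> bool" where
  "oplax_monoidal mulA eA mulB eB f \<longleftrightarrow> mono f \<and> f eA \<le> eB \<and>
     (\<forall>a b. f (mulA a b) \<le> mulB (f a) (f b))"

definition join_preserving :: "('a::complete_lattice \<Rightarrow> 'b::complete_lattice) \<Rightarrow> bool" where
  "join_preserving f \<longleftrightarrow> (\<forall>S. f (Sup S) = (SUP s\<in>S. f s))"

definition noncomm_spacetime :: "('a::complete_lattice \<Rightarrow> 'a \<Rightarrow> 'a) \<Rightarrow> 'a \<Rightarrow> ('a \<Rightarrow> 'a) \<Rightarrow> bool" where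
  "noncomm_spacetime mul e nabla \<longleftrightarrow> quantale mul e \<and> join_preserving nabla \<and>
     oplax_monoidal mul e mul e nabla"

definition is_implication :: "('a::order \<Rightarrow> 'a \<Rightarrow> 'a) \<Rightarrow> 'a \<Rightarrow> ('a \<Rightarrow> 'a \<Rightarrow> 'a) \<Rightarrow> bool" where
  "is_implication mul e imp \<longleftrightarrow>
     (\<forall>a a' b. a \<le> a' \<longrightarrow> imp a' b \<le> imp a b) \<and>
     (\<forall>a b b'. b \<le> b' \<longrightarrow> imp a b \<le> imp a b') \<and>
     (\<forall>a. e \<le> imp a a) \<and>
     (\<forall>a b c. mul (imp a b) (imp b c) \<le> imp a c)"

end

theory Submission
  imports Defs
begin

theorem theorem5p7:
  fixes mul :: "'a::complete_lattice \<Rightarrow> 'a \<Rightarrow> 'a" and e :: 'a and nabla :: "'a \<Rightarrow> 'a"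
  assumes "noncomm_spacetime mul e nabla"
  shows "\<exists>imp. is_implication mul e imp \<and>
           (\<forall>a b c. mul a (nabla b) \<le> c \<longleftrightarrow> b \<le> imp a c)"
proof -
  have assoc: "\<And>a b c. mul (mul a b) c = mul a (mul b c)"
    and unit: "\<And>a. mul e a = a \<and> mul a e = a"
    and mmono: "\<And>a a' b b'. a \<le> a' \<Longrightarrow> b \<le> b' \<Longrightarrow> mul a b \<le> mul a' b'"
    and dl: "\<And>a S. mul a (Sup S) = (SUP s\<in>S. mul a s)"
    and jp: "\<And>S. nabla (Sup S) = (SUP s\<in>S. nabla s)"
    and nm: "mono nabla" and ne: "nabla e \<le> e"
    and nmul: "\<And>a b. nabla (mul a b) \<le> mul (nabla a) (nabla b)"
    using assms unfolding noncomm_spacetime_def quantale_def monoidal_poset_def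
      join_preserving_def oplax_monoidal_def by blast+
  define imp where "imp a c = Sup {b. mul a (nabla b) \<le> c}" for a c
  have adj: "mul a (nabla b) \<le> c \<longleftrightarrow> b \<le> imp a c" for a b c
  proof
    assume "mul a (nabla b) \<le> c" then show "b \<le> imp a c" unfolding imp_def by (auto intro: Sup_upper)
  next
    assume h: "b \<le> imp a c"
    let ?S = "{b. mul a (nabla b) \<le> c}"
    have "mul a (nabla b) \<le> mul a (nabla (Sup ?S))"
      using h nm unfolding imp_def by (intro mmono) (auto dest: monoD)
    also have "nabla (Sup ?S) = Sup (nabla ` ?S)" using jp by simp
    also have "mul a (Sup (nabla ` ?S)) = (SUP t\<in>nabla ` ?S. mul a t)" using dl by simp
    also have "\<dots> \<le> c" by (auto intro: SUP_least)
    finally show "mul a (nabla b) \<le> c" .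
  qed
  have "is_implication mul e imp"
    unfolding is_implication_def
  proof (intro conjI allI impI)
    fix a a' b :: 'a assume "a \<le> a'"
    then show "imp a' b \<le> imp a b" unfolding imp_def
      by (intro Sup_subset_mono) (auto intro: order_trans[OF mmono])
  next
    fix a b b' :: 'a assume "b \<le> b'"
    then show "imp a b \<le> imp a b'" unfolding imp_def
      by (intro Sup_subset_mono) auto
  next
    fix a :: 'a
    have "mul a (nabla e) \<le> mul a e" using ne by (intro mmono) auto
    then show "e \<le> imp a a" using adj unit by metis
  next
    fix a b c :: 'a
    let ?x = "imp a b" and ?y = "imp b c"
    have hx: "mul a (nabla ?x) \<le> b" using adj by blast
    have hy: "mul b (nabla ?y) \<le> c" using adj by blast
    have "mul a (nabla (mul ?x ?y)) \<le> mul a (mul (nabla ?x) (nabla ?y))"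
      using nmul by (intro mmono) auto
    also have "\<dots> = mul (mul a (nabla ?x)) (nabla ?y)" using assoc by simp
    also have "\<dots> \<le> mul b (nabla ?y)" using hx by (intro mmono) auto
    also have "\<dots> \<le> c" by (rule hy)
    finally show "mul ?x ?y \<le> imp a c" using adj by blast
  qed
  then show ?thesis using adj by blast
qed

end
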